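(* Let $\nu\ge1$ and let $Z_1,\dots,Z_N$ be nonnegative random variables for some integer $N\ge2$. Suppose there exist constants $\Theta_1>0$, $\Theta_2>0$ such that $\mathbb EZ_i^{2p}\le[p^{\nu p}+\Theta_2^{\nu p}]\Theta_1^{2p}$ for all integers $p\ge1$ and all $i\in\{1,\dots,N\}$. Then for all real $p\ge1$, $$\mathbb E\max_{i\in\{1,\dots,N\}}Z_i^{2p}\le\big(p^{\nu p}+[\ln N+\Theta_2]^{\nu p}\big)\big((16e\nu)^\nu\Theta_1^2\big)^p.$$ *)

theory Defs
  imports "HOL-Probability.Probability"
begin

end

theory Submission
  imports Defs
begin


lemma bern: fixes y r :: real
  assumes "0 \<le> y" "0 \<le> r" "r \<le> 1" shows "y powr r \<le> r*y + (1-r)"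
proof (cases "y = 0")
  case True thus ?thesis using assms by simp
next
  case False
  thus ?thesis using Youngs_inequality_0[of r "1-r" y 1] assms by simp
qed

lemma bern2: fixes y r B :: real
  assumes "0 \<le> y" "0 < B" "0 \<le> r" "r \<le> 1" shows "y powr r \<le> B powr r * (r*y/B + (1-r))"
proof -
  have "y powr r = B powr r * (y/B) powr r" using assms by (simp add: powr_divide)
  also have "\<dots> \<le> B powr r * (r*(y/B) + (1-r))"
    using bern[of "y/B" r] assms by (intro mult_left_mono) auto
  finally show ?thesis by simp
qed

lemma arith_part:
  fixes p \<nu> \<Theta>1 \<Theta>2 :: real and N k :: nat
  assumes p: "p \<ge> 1" and nu: "\<nu> \<ge> 1" and N: "N \<ge> 2" and t1: "\<Theta>1 > 0" and t2: "\<Theta>2 > 0"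
    and k: "k = nat \<lceil>max p (ln (real N))\<rceil>"
  shows "(real N * ((real k powr (\<nu> * real k) + \<Theta>2 powr (\<nu> * real k)) * \<Theta>1 ^ (2 * k))) powr (p / real k)
     \<le> (p powr (\<nu> * p) + (ln (real N) + \<Theta>2) powr (\<nu> * p)) * ((16 * exp 1 * \<nu>) powr \<nu> * \<Theta>1 ^ 2) powr p"
proof -
  define L where "L = ln (real N)"
  have L0: "L > 0" unfolding L_def using N by simp
  have kge: "real k \<ge> max p L" unfolding k L_def by linarith
  have c0: "\<lceil>max p L\<rceil> \<ge> 0" using p by (simp add: max_def)
  have kle: "real k \<le> max p L + 1" unfolding k L_def[symmetric] using c0
    by (simp add: of_int_ceiling_le_add_one)
  have kpos: "real k \<ge> 1" using kge p by linarith
  define m where "m = max (real k) \<Theta>2"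
  define Q where "Q = max p (L + \<Theta>2)"
  define S where "S = p powr (\<nu> * p) + (L + \<Theta>2) powr (\<nu> * p)"
  have m0: "m \<ge> 1" unfolding m_def using kpos by simp
  have mQ: "m \<le> 2 * Q"
  proof -
    have "real k \<le> 2 * Q" using kle p L0 t2 unfolding Q_def by (cases "p \<le> L") (auto simp: max_def)
    moreover have "\<Theta>2 \<le> 2 * Q" using p L0 t2 unfolding Q_def by (auto simp: max_def)
    ultimately show ?thesis unfolding m_def by simp
  qed
  have r0: "p / real k > 0" "p / real k \<le> 1" using p kpos kge by auto
  have tN: "(real N) powr (p / real k) \<le> exp p"
  proof -
    have "(real N) powr (p / real k) = exp (L * p / real k)" unfolding L_def powr_def using N by simp
    also have "\<dots> \<le> exp p"
    proof -
      have "L / real k \<le> 1" using kge kpos by (simp add: divide_le_eq)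
      hence "p * (L / real k) \<le> p * 1" using p by (intro mult_left_mono) auto
      hence "L * p / real k \<le> p" by (simp add: mult.commute)
      thus ?thesis by simp
    qed
    finally show ?thesis .
  qed
  have t2: "(real k powr (\<nu> * real k) + \<Theta>2 powr (\<nu> * real k)) \<le> 2 * m powr (\<nu> * real k)"
  proof -
    have "real k powr (\<nu> * real k) \<le> m powr (\<nu> * real k)"
      unfolding m_def using nu kpos by (intro powr_mono2) auto
    moreover have "\<Theta>2 powr (\<nu> * real k) \<le> m powr (\<nu> * real k)"
      unfolding m_def using nu kpos t2 by (intro powr_mono2) auto
    ultimately show ?thesis by simp
  qed
  have t3: "(2 * m powr (\<nu> * real k)) powr (p / real k) \<le> 2 powr p * m powr (\<nu> * p)"
  proof -
    have "(2 * m powr (\<nu> * real k)) powr (p / real k) = 2 powr (p / real k) * m powr (\<nu> * p)"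
      using m0 kpos by (simp add: powr_mult powr_powr)
    also have "\<dots> \<le> 2 powr p * m powr (\<nu> * p)"
      using r0 kge kpos p by (intro mult_right_mono powr_mono) (auto simp: divide_le_eq)
    finally show ?thesis .
  qed
  have t4: "m powr (\<nu> * p) \<le> 2 powr (\<nu> * p) * S"
  proof -
    have "m powr (\<nu> * p) \<le> (2 * Q) powr (\<nu> * p)" using mQ m0 nu p by (intro powr_mono2) auto
    also have "\<dots> = 2 powr (\<nu> * p) * Q powr (\<nu> * p)" using p Q_def by (simp add: powr_mult)
    also have "Q powr (\<nu> * p) \<le> S" unfolding Q_def S_def max_def by auto
    hence "2 powr (\<nu> * p) * Q powr (\<nu> * p) \<le> 2 powr (\<nu> * p) * S" by simp
    finally show ?thesis .
  qed
  have Th: "(\<Theta>1 ^ (2 * k)) powr (p / real k) = (\<Theta>1 ^ 2) powr p"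
  proof -
    have a: "\<Theta>1 ^ (2 * k) = \<Theta>1 powr (real (2 * k))" using t1 by (simp only: powr_realpow)
    have b: "\<Theta>1 ^ 2 = \<Theta>1 powr (real 2)" using t1 by (simp only: powr_realpow)
    show ?thesis unfolding a b powr_powr using kpos by simp
  qed
  have "(real N * ((real k powr (\<nu> * real k) + \<Theta>2 powr (\<nu> * real k)) * \<Theta>1 ^ (2 * k))) powr (p / real k)
     = real N powr (p / real k) * (real k powr (\<nu> * real k) + \<Theta>2 powr (\<nu> * real k)) powr (p / real k) * (\<Theta>1 ^ 2) powr p"
    using Th by (simp add: powr_mult)
  also have "\<dots> \<le> exp p * (2 powr p * (2 powr (\<nu> * p) * S)) * (\<Theta>1 ^ 2) powr p"
  proof -
    have "(real k powr (\<nu> * real k) + \<Theta>2 powr (\<nu> * real k)) powr (p / real k) \<le> 2 powr p * (2 powr (\<nu> * p) * S)"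
      using powr_mono2[OF _ _ t2, of "p / real k"] r0 t3 t4
      by (smt (verit) mult_left_mono powr_ge_zero)
    thus ?thesis using tN by (intro mult_right_mono mult_mono) auto
  qed
  also have "\<dots> \<le> S * ((16 * exp 1 * \<nu>) powr \<nu> * \<Theta>1 ^ 2) powr p"
  proof -
    have "exp p * (2 powr p * 2 powr (\<nu> * p)) \<le> (16 * exp 1 * \<nu>) powr (\<nu> * p)"
    proof -
      have "exp p \<le> exp 1 powr (\<nu> * p)" using nu p by (simp add: powr_def)
      moreover have "2 powr p \<le> 2 powr (\<nu> * p)" using nu p by (intro powr_mono) auto
      ultimately have "exp p * (2 powr p * 2 powr (\<nu> * p)) \<le> exp 1 powr (\<nu> * p) * (2 powr (\<nu> * p) * 2 powr (\<nu> * p))"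
        by (intro mult_mono) auto
      also have "\<dots> = (exp 1 * 2 * 2) powr (\<nu> * p)" by (simp only: powr_mult[symmetric] mult.assoc)
      also have "\<dots> \<le> (16 * exp 1 * \<nu>) powr (\<nu> * p)" using nu p by (intro powr_mono2) auto
      finally show ?thesis .
    qed
    moreover have "((16 * exp 1 * \<nu>) powr \<nu> * \<Theta>1 ^ 2) powr p = (16 * exp 1 * \<nu>) powr (\<nu> * p) * (\<Theta>1 ^ 2) powr p"
      using nu by (simp add: powr_mult powr_powr)
    moreover have "S \<ge> 0" unfolding S_def by simp
    ultimately show ?thesis
      by (smt (verit) mult.assoc mult.commute mult_right_mono powr_ge_zero)
  qed
  finally show ?thesis unfolding S_def L_def .
qed


theorem corollaryB5:
  fixes M :: "'a measure" and Z :: "nat \<Rightarrow> 'a \<Rightarrow> real"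
    and N :: nat and \<nu> \<Theta>1 \<Theta>2 :: real
  assumes "prob_space M"
    and "\<nu> \<ge> 1" and "N \<ge> 2"
    and "\<And>i. i \<in> {1..N} \<Longrightarrow> Z i \<in> borel_measurable M"
    and "\<And>i x. i \<in> {1..N} \<Longrightarrow> x \<in> space M \<Longrightarrow> Z i x \<ge> 0"
    and "\<Theta>1 > 0" and "\<Theta>2 > 0"
    and "\<And>(p::nat) i. p \<ge> 1 \<Longrightarrow> i \<in> {1..N} \<Longrightarrow>
           (\<integral>\<^sup>+ x. ennreal (Z i x ^ (2 * p)) \<partial>M)
             \<le> ennreal ((real p powr (\<nu> * real p) + \<Theta>2 powr (\<nu> * real p)) * \<Theta>1 ^ (2 * p))"
  shows "\<And>p::real. p \<ge> 1 \<Longrightarrow>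
           (\<integral>\<^sup>+ x. ennreal (Max ((\<lambda>i. Z i x) ` {1..N}) powr (2 * p)) \<partial>M)
             \<le> ennreal ((p powr (\<nu> * p) + (ln (real N) + \<Theta>2) powr (\<nu> * p))
                 * ((16 * exp 1 * \<nu>) powr \<nu> * \<Theta>1 ^ 2) powr p)"
proof -
  fix p :: real assume p: "p \<ge> 1"
  interpret P: prob_space M by fact
  define k where "k = nat \<lceil>max p (ln (real N))\<rceil>"
  have kge: "real k \<ge> p" unfolding k_def by linarith
  have kpos: "k \<ge> 1" using kge p by linarith
  define C where "C = (real k powr (\<nu> * real k) + \<Theta>2 powr (\<nu> * real k)) * \<Theta>1 ^ (2 * k)"
  define B where "B = real N * C"
  define r where "r = p / real k"
  have C0: "C > 0" unfolding C_def using assms(6) assms(7) kpos by (intro mult_pos_pos add_pos_pos) auto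
  have B0: "B > 0" unfolding B_def using C0 assms(3) by simp
  have r0: "0 \<le> r" "r \<le> 1" unfolding r_def using p kge kpos by auto
  define S where "S x = (\<Sum>i\<in>{1..N}. Z i x ^ (2 * k))" for x
  have pw: "Max ((\<lambda>i. Z i x) ` {1..N}) powr (2 * p) \<le> B powr r * (1 - r) + B powr r * r / B * S x"
    if x: "x \<in> space M" for x
  proof -
    define Mx where "Mx = Max ((\<lambda>i. Z i x) ` {1..N})"
    have ne: "(\<lambda>i. Z i x) ` {1..N} \<noteq> {}" using assms(3) by auto
    obtain j where j: "j \<in> {1..N}" "Mx = Z j x"
      using Max_in[OF _ ne] unfolding Mx_def by auto
    have Mx0: "Mx \<ge> 0" using j assms(5)[OF j(1) x] by simp
    have S0: "\<And>i. i \<in> {1..N} \<Longrightarrow> Z i x ^ (2 * k) \<ge> 0" using assms(5)[OF _ x] by simp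
    have MS: "Mx ^ (2 * k) \<le> S x" unfolding S_def j(2)
      by (rule member_le_sum[OF j(1)]) (use S0 in auto)
    have eq: "Mx powr (2 * p) = (Mx ^ (2 * k)) powr r"
    proof (cases "Mx = 0")
      case True thus ?thesis using kpos p r0 unfolding r_def by simp
    next
      case False
      hence "Mx > 0" using Mx0 by simp
      hence "Mx ^ (2 * k) = Mx powr (real (2 * k))" by (simp only: powr_realpow)
      thus ?thesis unfolding r_def using kpos by (simp add: powr_powr)
    qed
    have "(Mx ^ (2 * k)) powr r \<le> (S x) powr r"
      using MS Mx0 r0 by (intro powr_mono2) auto
    also have "\<dots> \<le> B powr r * (r * S x / B + (1 - r))"
      using bern2[of "S x" B r] B0 r0 MS Mx0 by (smt (verit) zero_le_power)
    also have "\<dots> = B powr r * (1 - r) + B powr r * r / B * S x" by (simp add: algebra_simps)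
    finally show ?thesis unfolding Mx_def[symmetric] eq .
  qed
  have ca: "B powr r * (1 - r) \<ge> 0" using r0 by simp
  have cb: "B powr r * r / B \<ge> 0" using r0 B0 by simp
  have meas: "\<And>i. i \<in> {1..N} \<Longrightarrow> (\<lambda>x. ennreal (Z i x ^ (2 * k))) \<in> borel_measurable M"
    using assms(4) by measurable
  have "(\<integral>\<^sup>+ x. ennreal (Max ((\<lambda>i. Z i x) ` {1..N}) powr (2 * p)) \<partial>M)
      \<le> (\<integral>\<^sup>+ x. (ennreal (B powr r * (1 - r)) + ennreal (B powr r * r / B) * (\<Sum>i\<in>{1..N}. ennreal (Z i x ^ (2 * k)))) \<partial>M)"
  proof (rule nn_integral_mono)
    fix x assume x: "x \<in> space M"
    have S0: "\<And>i. i \<in> {1..N} \<Longrightarrow> Z i x ^ (2 * k) \<ge> 0" using assms(5)[OF _ x] by simp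
    have "(\<Sum>i\<in>{1..N}. ennreal (Z i x ^ (2 * k))) = ennreal (S x)"
      unfolding S_def using S0 by (simp add: sum_ennreal)
    moreover have "S x \<ge> 0" unfolding S_def using S0 by (simp add: sum_nonneg)
    ultimately have "ennreal (B powr r * (1 - r)) + ennreal (B powr r * r / B) * (\<Sum>i\<in>{1..N}. ennreal (Z i x ^ (2 * k)))
       = ennreal (B powr r * (1 - r) + B powr r * r / B * S x)"
      using ennreal_plus[OF ca mult_nonneg_nonneg[OF cb \<open>S x \<ge> 0\<close>]] ennreal_mult[OF cb \<open>S x \<ge> 0\<close>] by simp
    thus "ennreal (Max ((\<lambda>i. Z i x) ` {1..N}) powr (2 * p)) \<le> ennreal (B powr r * (1 - r)) + ennreal (B powr r * r / B) * (\<Sum>i\<in>{1..N}. ennreal (Z i x ^ (2 * k)))"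
      using pw[OF x] by (simp add: ennreal_leI)
  qed
  also have "\<dots> = ennreal (B powr r * (1 - r)) + ennreal (B powr r * r / B) * (\<Sum>i\<in>{1..N}. \<integral>\<^sup>+ x. ennreal (Z i x ^ (2 * k)) \<partial>M)"
  proof -
    have ms: "(\<lambda>x. \<Sum>i\<in>{1..N}. ennreal (Z i x ^ (2 * k))) \<in> borel_measurable M"
      using meas by (rule borel_measurable_sum)
    have "(\<integral>\<^sup>+ x. (ennreal (B powr r * (1 - r)) + ennreal (B powr r * r / B) * (\<Sum>i\<in>{1..N}. ennreal (Z i x ^ (2 * k)))) \<partial>M)
      = (\<integral>\<^sup>+ x. ennreal (B powr r * (1 - r)) \<partial>M) + (\<integral>\<^sup>+ x. ennreal (B powr r * r / B) * (\<Sum>i\<in>{1..N}. ennreal (Z i x ^ (2 * k))) \<partial>M)"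
      by (rule nn_integral_add) (use ms in auto)
    also have "\<dots> = ennreal (B powr r * (1 - r)) + ennreal (B powr r * r / B) * (\<integral>\<^sup>+ x. (\<Sum>i\<in>{1..N}. ennreal (Z i x ^ (2 * k))) \<partial>M)"
      by (subst nn_integral_cmult[OF ms]) (simp add: P.emeasure_space_1)
    also have "(\<integral>\<^sup>+ x. (\<Sum>i\<in>{1..N}. ennreal (Z i x ^ (2 * k))) \<partial>M) = (\<Sum>i\<in>{1..N}. \<integral>\<^sup>+ x. ennreal (Z i x ^ (2 * k)) \<partial>M)"
      by (rule nn_integral_sum) (rule meas)
    finally show ?thesis .
  qed
  also have "\<dots> \<le> ennreal (B powr r * (1 - r)) + ennreal (B powr r * r / B) * (\<Sum>i\<in>{1..N}. ennreal C)"
    using assms(8)[OF kpos] unfolding C_def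
    by (intro add_left_mono mult_left_mono sum_mono) auto
  also have "\<dots> = ennreal (B powr r * (1 - r) + B powr r * r / B * B)"
  proof -
    have "(\<Sum>i\<in>{1..N}. ennreal C) = ennreal B" unfolding B_def using C0
      by (simp add: ennreal_mult ennreal_of_nat_eq_real_of_nat)
    thus ?thesis using ennreal_plus[OF ca mult_nonneg_nonneg[OF cb less_imp_le[OF B0]]] ennreal_mult[OF cb less_imp_le[OF B0]]
      by simp
  qed
  also have "\<dots> = ennreal (B powr r)" using B0 by (simp add: algebra_simps)
  also have "\<dots> \<le> ennreal ((p powr (\<nu> * p) + (ln (real N) + \<Theta>2) powr (\<nu> * p))
                 * ((16 * exp 1 * \<nu>) powr \<nu> * \<Theta>1 ^ 2) powr p)"
    unfolding B_def C_def r_def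
    by (rule ennreal_leI, rule arith_part[OF p assms(2) assms(3) assms(6) assms(7) k_def])
  finally show "(\<integral>\<^sup>+ x. ennreal (Max ((\<lambda>i. Z i x) ` {1..N}) powr (2 * p)) \<partial>M)
             \<le> ennreal ((p powr (\<nu> * p) + (ln (real N) + \<Theta>2) powr (\<nu> * p))
                 * ((16 * exp 1 * \<nu>) powr \<nu> * \<Theta>1 ^ 2) powr p)" .
qed

end
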